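(* Let $\alpha\in\mathbb{R}\setminus\{0\}$, let $\delta^{\star}(\alpha)=1/\alpha^2$ if $\alpha\le 2$ and $\delta^{\star}(\alpha)=\frac{1}{2\alpha}\exp\{1-\frac{\alpha}{2}\}$ if $\alpha>2$, let $|\delta|\le\delta^{\star}(\alpha)$, and let $$C(u,v)=uv+\delta\left(1-e^{\alpha(u-u^2)}\right)\left(1-e^{\alpha(v-v^2)}\right),\quad (u,v)\in[0,1]^2.$$ Then Spearman's rho $\rho_C=12\int_0^1\int_0^1 C(u,v)\,du\,dv-3$ and Gini's gamma coefficient $\gamma_C=4\left\{\int_0^1 C(u,1-u)\,du-\int_0^1(u-C(u,u))\,du\right\}$ are given by $$\rho_C=\begin{cases}12\delta\left[1-\sqrt{\frac{\pi}{|\alpha|}}\,e^{\alpha/4}\,\mathrm{erfi}\left(\frac{\sqrt{|\alpha|}}{2}\right)\right]^2,&\alpha<0,\\[2mm] 12\delta\left[1-\sqrt{\frac{\pi}{\alpha}}\,e^{\alpha/4}\,\mathrm{erf}\left(\frac{\sqrt{\alpha}}{2}\right)\right]^2,&\alpha>0,\end{cases}$$ $$\gamma_C=\begin{cases}8\delta\left[1-2\sqrt{\frac{\pi}{|\alpha|}}\,e^{\alpha/4}\,\mathrm{erfi}\left(\frac{\sqrt{|\alpha|}}{2}\right)+\sqrt{\frac{\pi}{2|\alpha|}}\,e^{\alpha/2}\,\mathrm{erfi}\left(\sqrt{\frac{|\alpha|}{2}}\right)\right],&\alpha<0,\\[2mm] 8\delta\left[1-2\sqrt{\frac{\pi}{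\alpha}}\,e^{\alpha/4}\,\mathrm{erf}\left(\frac{\sqrt{\alpha}}{2}\right)+\sqrt{\frac{\pi}{2\alpha}}\,e^{\alpha/2}\,\mathrm{erf}\left(\sqrt{\frac{\alpha}{2}}\right)\right],&\alpha>0.\end{cases}$$
   Context: $\mathrm{erf}(t)=\frac{2}{\sqrt{\pi}}\int_0^t e^{-z^2}\,dz$ is the error function and $\mathrm{erfi}(t)=\frac{2}{\sqrt{\pi}}\int_0^t e^{z^2}\,dz$ is the imaginary error function. *)

theory Defs
  imports "HOL-Analysis.Analysis"
begin

text \<open>Error function and imaginary error function (arguments used here are nonnegative;
  for t < 0 the convention integral over {0..t} = {} would be wrong, so we use the oriented form).\<close>
definition erf :: "real \<Rightarrow> real" where
  "erf t = (if 0 \<le> t then 2 / sqrt pi * integral {0..t} (\<lambda>z. exp (- z\<^sup>2))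
            else - (2 / sqrt pi * integral {t..0} (\<lambda>z. exp (- z\<^sup>2))))"

definition erfi :: "real \<Rightarrow> real" where
  "erfi t = (if 0 \<le> t then 2 / sqrt pi * integral {0..t} (\<lambda>z. exp (z\<^sup>2))
            else - (2 / sqrt pi * integral {t..0} (\<lambda>z. exp (z\<^sup>2))))"

definition delta_star :: "real \<Rightarrow> real" where
  "delta_star \<alpha> = (if \<alpha> \<le> 2 then 1 / \<alpha>\<^sup>2 else 1 / (2 * \<alpha>) * exp (1 - \<alpha> / 2))"

definition Ccop :: "real \<Rightarrow> real \<Rightarrow> real \<Rightarrow> real \<Rightarrow> real" where
  "Ccop \<alpha> \<delta> u v = u * v + \<delta> * (1 - exp (\<alpha> * (u - u\<^sup>2))) * (1 - exp (\<alpha> * (v - v\<^sup>2)))"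

definition spearman_rho :: "(real \<Rightarrow> real \<Rightarrow> real) \<Rightarrow> real" where
  "spearman_rho C = 12 * integral {0..1} (\<lambda>u. integral {0..1} (\<lambda>v. C u v)) - 3"

definition gini_gamma :: "(real \<Rightarrow> real \<Rightarrow> real) \<Rightarrow> real" where
  "gini_gamma C = 4 * (integral {0..1} (\<lambda>u. C u (1 - u)) - integral {0..1} (\<lambda>u. u - C u u))"

end

theory Submission imports Defs begin
lemma key:
  fixes s k :: real assumes s: "s > 0"
  shows "integral {0..1} (\<lambda>u. exp (k * (s*(u-1/2))^2)) = 2/s * integral {0..s/2} (\<lambda>z. exp(k*z^2))"
proof -
  define f where "f = (\<lambda>z::real. exp(k*z^2))"
  have cont: "continuous_on A f" for A unfolding f_def by (intro continuous_intros)
  have h1: "((\<lambda>u. s *\<^sub>R f (s*(u-1/2))) has_integral integral {s*(0-1/2)..s*(1-1/2)} f) {0..1}"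
    apply (rule has_integral_substitution[where c="-s/2" and d="s/2"])
    using s apply (auto intro!: derivative_eq_intros cont simp: mult_left_mono)
    apply (simp add: algebra_simps)
    done
  have "integral {0..1} (\<lambda>u. s * f (s*(u-1/2))) = integral {-(s/2)..s/2} f"
    using h1 by (simp add: has_integral_iff)
  hence h2: "s * integral {0..1} (\<lambda>u. f (s*(u-1/2))) = integral {-(s/2)..s/2} f"
    by simp
  have h3: "integral {-(s/2)..s/2} f = integral {-(s/2)..0} f + integral {0..s/2} f"
    using s by (intro Henstock_Kurzweil_Integration.integral_combine[symmetric] integrable_continuous_interval cont) auto
  have "integral {-(s/2)..-0} (\<lambda>x. f (-x)) = integral {0..s/2} f"
    by (rule Henstock_Kurzweil_Integration.integral_reflect_real)
  hence h4: "integral {-(s/2)..0} f = integral {0..s/2} f" by (simp add: f_def)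
  show ?thesis using h2 h3 h4 s unfolding f_def by (simp add: field_simps)
qed

lemma I_formula:
  fixes a :: real assumes a: "a \<noteq> 0"
  shows "integral {0..1} (\<lambda>u. exp (a*(u-u^2))) =
    (if a < 0 then sqrt (pi / \<bar>a\<bar>) * exp (a/4) * erfi (sqrt \<bar>a\<bar> / 2)
     else sqrt (pi / a) * exp (a/4) * erf (sqrt a / 2))"
proof (cases "a < 0")
  case True
  define s where "s = sqrt \<bar>a\<bar>"
  have s: "s > 0" using a by (simp add: s_def)
  have sa: "sqrt \<bar>a\<bar> = s" by (simp add: s_def)
  have ss: "s * s = - a" using True by (simp add: s_def)
  have eq: "(\<lambda>u. exp (a*(u-u^2))) = (\<lambda>u. exp (a/4) * exp (1 * (s*(u-1/2))^2))"
    by (rule ext) (simp add: exp_add[symmetric] power_mult_distrib ss algebra_simps power2_eq_square)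
  have "integral {0..1} (\<lambda>u. exp (a*(u-u^2))) = exp (a/4) * (2/s * integral {0..s/2} (\<lambda>z. exp(1*z^2)))"
    unfolding eq by (simp only: integral_mult_right key[OF s])
  also have "\<dots> = sqrt (pi / \<bar>a\<bar>) * exp (a/4) * erfi (sqrt \<bar>a\<bar> / 2)"
    using s unfolding erfi_def sa
    by (simp add: real_sqrt_divide field_simps sa)
  finally show ?thesis using True by simp
next
  case False
  hence ap: "a > 0" using a by simp
  define s where "s = sqrt a"
  have s: "s > 0" using ap by (simp add: s_def)
  have sa: "sqrt a = s" by (simp add: s_def)
  have ss: "s * s = a" using ap by (simp add: s_def)
  have eq: "(\<lambda>u. exp (a*(u-u^2))) = (\<lambda>u. exp (a/4) * exp ((-1) * (s*(u-1/2))^2))"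
    by (rule ext) (simp add: exp_add[symmetric] power_mult_distrib ss algebra_simps power2_eq_square)
  have "integral {0..1} (\<lambda>u. exp (a*(u-u^2))) = exp (a/4) * (2/s * integral {0..s/2} (\<lambda>z. exp((-1)*z^2)))"
    unfolding eq by (simp only: integral_mult_right key[OF s])
  also have "\<dots> = sqrt (pi / a) * exp (a/4) * erf (sqrt a / 2)"
    using s unfolding erf_def sa
    by (simp add: real_sqrt_divide field_simps sa)
  finally show ?thesis using False by simp
qed

lemma ftc_poly:
  "((\<lambda>v::real. v) has_integral 1/2) {0..1}" "((\<lambda>v::real. v^2) has_integral 1/3) {0..1}"
  "((\<lambda>v::real. 1::real) has_integral 1) {0..1}"
proof -
  have "((\<lambda>v::real. v) has_integral (1^2/2 - 0^2/2)) {0..1}"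
    by (rule fundamental_theorem_of_calculus)
       (auto intro!: derivative_eq_intros simp: has_real_derivative_iff_has_vector_derivative[symmetric])
  thus "((\<lambda>v::real. v) has_integral 1/2) {0..1}" by simp
  have "((\<lambda>v::real. v^2) has_integral (1^3/3 - 0^3/3)) {0..1}"
    by (rule fundamental_theorem_of_calculus)
       (auto intro!: derivative_eq_intros simp: has_real_derivative_iff_has_vector_derivative[symmetric])
  thus "((\<lambda>v::real. v^2) has_integral 1/3) {0..1}" by simp
  show "((\<lambda>v::real. 1::real) has_integral 1) {0..1}" using has_integral_const_real[of "1::real" 0 1] by simp
qed


lemma sqrt_half: "sqrt (2*x) / 2 = sqrt (x/2)"
proof -
  have "sqrt (x/2) = sqrt ((2*x)/2^2)" by simp
  also have "\<dots> = sqrt (2*x) / sqrt (2^2)" by (rule real_sqrt_divide)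
  also have "\<dots> = sqrt (2*x) / 2" by simp
  finally show ?thesis by simp
qed

lemma main_I:
  fixes \<alpha> \<delta> :: real
  defines "e \<equiv> (\<lambda>u. exp (\<alpha>*(u-u^2)))"
  defines "I \<equiv> integral {0..1} e"
  defines "J \<equiv> integral {0..1} (\<lambda>u. exp ((2*\<alpha>)*(u-u^2)))"
  shows "spearman_rho (Ccop \<alpha> \<delta>) = 12 * \<delta> * (1 - I)^2"
    and "gini_gamma (Ccop \<alpha> \<delta>) = 8 * \<delta> * (1 - 2 * I + J)"
proof -
  have he: "(e has_integral I) {0..1}" unfolding I_def e_def
    by (rule integrable_integral) (intro integrable_continuous_interval continuous_intros)
  have sq: "(e u)^2 = exp ((2*\<alpha>)*(u-u^2))" for u
    by (simp add: e_def power2_eq_square exp_add[symmetric] algebra_simps)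
  have he2: "((\<lambda>u. (e u)^2) has_integral J) {0..1}" unfolding J_def sq
    by (rule integrable_integral) (intro integrable_continuous_interval continuous_intros)
  have inner: "((\<lambda>v. Ccop \<alpha> \<delta> u v) has_integral (u * (1/2) + \<delta>*(1-e u) * (1 - I))) {0..1}" for u
  proof -
    have eq: "(\<lambda>v. Ccop \<alpha> \<delta> u v) = (\<lambda>v. u * v + \<delta>*(1-e u) * (1 - e v))"
      by (auto simp: Ccop_def e_def)
    show ?thesis unfolding eq
      by (rule has_integral_add[OF has_integral_mult_right[OF ftc_poly(1)] has_integral_mult_right[OF has_integral_diff[OF ftc_poly(3) he]]])
  qed
  have outer: "((\<lambda>u. u * (1/2) + \<delta>*(1-e u) * (1 - I)) has_integral ((1/2)*(1/2) + (\<delta>*(1-I)) * (1 - I))) {0..1}"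
  proof -
    have eq: "(\<lambda>u. u * (1/2) + \<delta>*(1-e u) * (1 - I)) = (\<lambda>u. (1/2) * u + (\<delta>*(1-I)) * (1 - e u))"
      by (auto simp: algebra_simps)
    show ?thesis unfolding eq
      by (rule has_integral_add[OF has_integral_mult_right[OF ftc_poly(1)] has_integral_mult_right[OF has_integral_diff[OF ftc_poly(3) he]]])
  qed
  have "integral {0..1} (\<lambda>u. integral {0..1} (\<lambda>v. Ccop \<alpha> \<delta> u v)) = integral {0..1} (\<lambda>u. u * (1/2) + \<delta>*(1-e u) * (1 - I))"
    using inner by (intro integral_cong) (simp add: integral_unique)
  also have "\<dots> = (1/2)*(1/2) + (\<delta>*(1-I)) * (1 - I)" using outer by (rule integral_unique)
  finally show "spearman_rho (Ccop \<alpha> \<delta>) = 12 * \<delta> * (1 - I)^2"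
    unfolding spearman_rho_def by (simp add: power2_eq_square algebra_simps)
  have sym: "exp (\<alpha>*((1-u)-(1-u)^2)) = e u" for u
    by (simp add: e_def power2_eq_square algebra_simps)
  have Q: "((\<lambda>u. 1 - 2 * e u + (e u)^2) has_integral (1 - 2 * I + J)) {0..1}"
    by (rule has_integral_add[OF has_integral_diff[OF ftc_poly(3) has_integral_mult_right[OF he]] he2])
  have g1: "((\<lambda>u. Ccop \<alpha> \<delta> u (1-u)) has_integral ((1/2 - 1/3) + \<delta> * (1 - 2 * I + J))) {0..1}"
  proof -
    have eq: "(\<lambda>u. Ccop \<alpha> \<delta> u (1-u)) = (\<lambda>u. (u - u^2) + \<delta> * (1 - 2 * e u + (e u)^2))"
    proof
      fix u show "Ccop \<alpha> \<delta> u (1-u) = (u - u^2) + \<delta> * (1 - 2 * e u + (e u)^2)"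
        unfolding Ccop_def sym by (simp add: e_def power2_eq_square algebra_simps)
    qed
    show ?thesis unfolding eq
      by (rule has_integral_add[OF has_integral_diff[OF ftc_poly(1) ftc_poly(2)] has_integral_mult_right[OF Q]])
  qed
  have g2: "((\<lambda>u. u - Ccop \<alpha> \<delta> u u) has_integral ((1/2 - 1/3) - \<delta> * (1 - 2 * I + J))) {0..1}"
  proof -
    have eq: "(\<lambda>u. u - Ccop \<alpha> \<delta> u u) = (\<lambda>u. (u - u^2) - \<delta> * (1 - 2 * e u + (e u)^2))"
    proof
      fix u show "u - Ccop \<alpha> \<delta> u u = (u - u^2) - \<delta> * (1 - 2 * e u + (e u)^2)"
        unfolding Ccop_def by (simp add: e_def power2_eq_square algebra_simps)
    qed
    show ?thesis unfolding eq
      by (rule has_integral_diff[OF has_integral_diff[OF ftc_poly(1) ftc_poly(2)] has_integral_mult_right[OF Q]])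
  qed
  show "gini_gamma (Ccop \<alpha> \<delta>) = 8 * \<delta> * (1 - 2 * I + J)"
    unfolding gini_gamma_def using integral_unique[OF g1] integral_unique[OF g2]
    by (simp add: algebra_simps)
qed

theorem proposition1:
  fixes \<alpha> \<delta> :: real
  assumes "\<alpha> \<noteq> 0" and "\<bar>\<delta>\<bar> \<le> delta_star \<alpha>"
  shows "(spearman_rho (Ccop \<alpha> \<delta>) =
           (if \<alpha> < 0
            then 12 * \<delta> * (1 - sqrt (pi / \<bar>\<alpha>\<bar>) * exp (\<alpha> / 4) * erfi (sqrt \<bar>\<alpha>\<bar> / 2))\<^sup>2
            else 12 * \<delta> * (1 - sqrt (pi / \<alpha>) * exp (\<alpha> / 4) * erf (sqrt \<alpha> / 2))\<^sup>2)) \<and>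
         (gini_gamma (Ccop \<alpha> \<delta>) =
           (if \<alpha> < 0
            then 8 * \<delta> * (1 - 2 * sqrt (pi / \<bar>\<alpha>\<bar>) * exp (\<alpha> / 4) * erfi (sqrt \<bar>\<alpha>\<bar> / 2)
                   + sqrt (pi / (2 * \<bar>\<alpha>\<bar>)) * exp (\<alpha> / 2) * erfi (sqrt (\<bar>\<alpha>\<bar> / 2)))
            else 8 * \<delta> * (1 - 2 * sqrt (pi / \<alpha>) * exp (\<alpha> / 4) * erf (sqrt \<alpha> / 2)
                   + sqrt (pi / (2 * \<alpha>)) * exp (\<alpha> / 2) * erf (sqrt (\<alpha> / 2)))))"
proof -
  have IA: "integral {0..1} (\<lambda>u. exp (\<alpha>*(u-u^2))) =
    (if \<alpha> < 0 then sqrt (pi / \<bar>\<alpha>\<bar>) * exp (\<alpha>/4) * erfi (sqrt \<bar>\<alpha>\<bar> / 2)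
     else sqrt (pi / \<alpha>) * exp (\<alpha>/4) * erf (sqrt \<alpha> / 2))"
    by (rule I_formula[OF assms(1)])
  have JA: "integral {0..1} (\<lambda>u. exp ((2*\<alpha>)*(u-u^2))) =
    (if 2*\<alpha> < 0 then sqrt (pi / \<bar>2*\<alpha>\<bar>) * exp ((2*\<alpha>)/4) * erfi (sqrt \<bar>2*\<alpha>\<bar> / 2)
     else sqrt (pi / (2*\<alpha>)) * exp ((2*\<alpha>)/4) * erf (sqrt (2*\<alpha>) / 2))"
    by (rule I_formula) (use assms(1) in simp)
  have s1: "sqrt \<bar>2*\<alpha>\<bar> / 2 = sqrt (\<bar>\<alpha>\<bar>/2)" using sqrt_half[of "\<bar>\<alpha>\<bar>"] by (simp add: abs_mult)
  have s2: "sqrt (2*\<alpha>) / 2 = sqrt (\<alpha>/2)" by (rule sqrt_half)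
  have e2: "(2*\<alpha>)/4 = \<alpha>/2" by simp
  show ?thesis
    unfolding main_I IA JA s1 s2 e2 by (auto simp: abs_mult)
qed

end
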